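(* Let $P\subset\mathbb{R}^d$ be a simple $d$-polytope, let $H^+$ be a closed halfspace whose bounding hyperplane $\overline{H}$ contains no vertex of $P$ and meets the interior of $P$, and let $P'=P\cap H^+$. Call a face of $P'$ new if it is contained in $\overline{H}$; for a new face $f'$ of $P'$, its parent face is the face $f$ of $P$ with $f'=\overline{H}\cap f$ (so a new $k$-face has a parent $(k+1)$-face). Let $0\le k\le d-2$ and let $u',v'$ be new $k$-faces of $P'$ with parent $(k+1)$-faces $u,v$ of $P$. Then $u'$ and $v'$ lie on a common $(k+1)$-face of $P'$ if and only if $u$ and $v$ lie on a common $(k+2)$-face of $P$.
   Context: A $d$-polytope is simple if every vertex lies in exactly $d$ facets. A $k$-face is a face of dimension $k$; faces of a polytope are $\emptyset$, the polytope itself, and intersections of the polytope with supporting hyperplanes. *)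

theory Defs
  imports "HOL-Analysis.Analysis"
begin

definition simple_polytope :: "'a::euclidean_space set \<Rightarrow> bool" where
  "simple_polytope P \<longleftrightarrow> polytope P \<and> aff_dim P = int DIM('a) \<and>
     (\<forall>v. v extreme_point_of P \<longrightarrow> card {F. F facet_of P \<and> v \<in> F} = DIM('a))"

end

theory Submission
  imports Defs
begin

lemma hyp_le:
  fixes S :: "'a::euclidean_space set"
  assumes "\<not> S \<subseteq> {x. a \<bullet> x = b}"
  shows "aff_dim (S \<inter> {x. a \<bullet> x = b}) \<le> aff_dim S - 1"
proof -
  have ne: "S \<noteq> {}" using assms by blast
  have "S \<inter> {x. a \<bullet> x = b} \<subseteq> affine hull S \<inter> {x. a \<bullet> x = b}"
    using hull_subset[of S affine] by blast
  then have 1: "aff_dim (S \<inter> {x. a \<bullet> x = b}) \<le> aff_dim (affine hull S \<inter> {x. a \<bullet> x = b})"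
    by (rule aff_dim_subset)
  have ns: "\<not> affine hull S \<subseteq> {v. a \<bullet> v = b}" using assms hull_subset[of S affine] by blast
  have "aff_dim S \<noteq> -1" using ne aff_dim_empty[of S] by blast
  then have ge: "aff_dim S \<ge> 0" using aff_dim_geq[of S] by linarith
  have eq: "aff_dim (affine hull S \<inter> {x. a \<bullet> x = b}) =
     (if affine hull S \<inter> {v. a \<bullet> v = b} = {} then - 1
      else if affine hull S \<subseteq> {v. a \<bullet> v = b} then aff_dim (affine hull S)
      else aff_dim (affine hull S) - 1)"
    by (rule aff_dim_affine_Int_hyperplane[OF affine_affine_hull])
  have 2: "aff_dim (affine hull S \<inter> {x. a \<bullet> x = b}) \<le> aff_dim S - 1"
  proof (cases "affine hull S \<inter> {v. a \<bullet> v = b} = {}")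
    case True then show ?thesis using eq ge by simp
  next
    case False then show ?thesis using eq ns by simp
  qed
  show ?thesis using 1 2 by linarith
qed

lemma cross_pt:
  fixes S :: "'a::euclidean_space set"
  assumes "convex S" "x \<in> S" "w \<in> S" "(a \<bullet> x - b) * (a \<bullet> w - b) < 0"
  shows "x \<in> affine hull (insert w (S \<inter> {x. a \<bullet> x = b}))"
proof -
  have d: "a \<bullet> x \<noteq> a \<bullet> w" using assms(4) by auto
  define t where "t = (a \<bullet> x - b) / (a \<bullet> x - a \<bullet> w)"
  have t0: "0 < t" and t1: "t < 1" using assms(4) unfolding t_def
    by (auto simp: mult_less_0_iff divide_simps)
  define y where "y = (1 - t) *\<^sub>R x + t *\<^sub>R w"
  have yS: "y \<in> S" using assms(1-3) t0 t1 unfolding y_def convex_def by auto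
  have "a \<bullet> y = a \<bullet> x - t * (a \<bullet> x - a \<bullet> w)" unfolding y_def
    by (simp add: inner_add_right algebra_simps)
  also have "t * (a \<bullet> x - a \<bullet> w) = a \<bullet> x - b" using d unfolding t_def by simp
  finally have "a \<bullet> y = b" by simp
  then have yT: "y \<in> insert w (S \<inter> {x. a \<bullet> x = b})" using yS by auto
  have wT: "w \<in> insert w (S \<inter> {x. a \<bullet> x = b})" by auto
  have eq: "x = (1/(1-t)) *\<^sub>R y + (- t/(1-t)) *\<^sub>R w"
  proof -
    have "(1/(1-t)) *\<^sub>R y + (- t/(1-t)) *\<^sub>R w = (1/(1-t)) *\<^sub>R ((1 - t) *\<^sub>R x)"
      unfolding y_def by (simp add: scaleR_add_right scaleR_diff_right divide_inverse algebra_simps)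
    also have "\<dots> = x" using t1 by simp
    finally show ?thesis by simp
  qed
  have "(1/(1-t)) + (- t/(1-t)) = 1" using t1 by (simp add: divide_simps)
  then show ?thesis
    using affine_affine_hull[of "insert w (S \<inter> {x. a \<bullet> x = b})"] hull_inc[OF yT, of affine] hull_inc[OF wT, of affine]
    unfolding affine_def eq by blast
qed

lemma hyp_ge:
  fixes S :: "'a::euclidean_space set"
  assumes S: "convex S" and p: "p \<in> S" "a \<bullet> p < b" and q: "q \<in> S" "a \<bullet> q > b"
  shows "aff_dim S \<le> aff_dim (S \<inter> {x. a \<bullet> x = b}) + 1"
proof -
  define T where "T = insert p (S \<inter> {x. a \<bullet> x = b})"
  have qT: "q \<in> affine hull T"
    unfolding T_def by (rule cross_pt[OF S q(1) p(1)]) (use p q in \<open>simp add: mult_pos_neg\<close>)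
  have sub: "S \<subseteq> affine hull T"
  proof
    fix x assume x: "x \<in> S"
    consider "a \<bullet> x = b" | "a \<bullet> x > b" | "a \<bullet> x < b" by linarith
    then show "x \<in> affine hull T"
    proof cases
      case 1 then show ?thesis using x unfolding T_def by (auto intro: hull_inc)
    next
      case 2 then show ?thesis unfolding T_def
        by (intro cross_pt[OF S x p(1)]) (use p in \<open>simp add: mult_pos_neg\<close>)
    next
      case 3
      then have "x \<in> affine hull (insert q (S \<inter> {x. a \<bullet> x = b}))"
        by (intro cross_pt[OF S x q(1)]) (use q in \<open>simp add: mult_neg_pos\<close>)
      moreover have "affine hull (insert q (S \<inter> {x. a \<bullet> x = b})) \<subseteq> affine hull T"
        by (rule hull_minimal) (use qT in \<open>auto simp: T_def intro: hull_inc affine_affine_hull\<close>)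
      ultimately show ?thesis by blast
    qed
  qed
  have "aff_dim S \<le> aff_dim (affine hull T)" by (rule aff_dim_subset[OF sub])
  also have "\<dots> = aff_dim T" by simp
  also have "\<dots> \<le> aff_dim (S \<inter> {x. a \<bullet> x = b}) + 1"
    unfolding T_def aff_dim_insert by simp
  finally show ?thesis .
qed

lemma both_sides:
  fixes P :: "'a::euclidean_space set"
  assumes P: "polytope P" and nv: "\<forall>x. x extreme_point_of P \<longrightarrow> a \<bullet> x \<noteq> b"
    and C: "C face_of P" and ne: "C \<inter> {x. a \<bullet> x = b} \<noteq> {}"
  shows "\<exists>p\<in>C. a \<bullet> p < b" "\<exists>q\<in>C. a \<bullet> q > b"
proof -
  have Cp: "polytope C" using face_of_polytope_polytope[OF P C] .
  have CK: "C = convex hull {x. x extreme_point_of C}"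
    using Krein_Milman_Minkowski[OF polytope_imp_compact[OF Cp] polytope_imp_convex[OF Cp]] .
  have ext: "a \<bullet> x \<noteq> b" if "x extreme_point_of C" for x
    using that nv extreme_point_of_face[OF C] by blast
  have extC: "x \<in> C" if "x extreme_point_of C" for x
    using that extreme_point_of_def by blast
  show "\<exists>p\<in>C. a \<bullet> p < b"
  proof (rule ccontr)
    assume "\<not> ?thesis"
    then have "{x. x extreme_point_of C} \<subseteq> {x. a \<bullet> x > b}"
      using ext extC by force
    then have "convex hull {x. x extreme_point_of C} \<subseteq> {x. a \<bullet> x > b}"
      by (rule hull_minimal) (rule convex_halfspace_gt)
    then show False using ne CK by auto
  qed
  show "\<exists>q\<in>C. a \<bullet> q > b"
  proof (rule ccontr)
    assume "\<not> ?thesis"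
    then have "{x. x extreme_point_of C} \<subseteq> {x. a \<bullet> x < b}"
      using ext extC by force
    then have "convex hull {x. x extreme_point_of C} \<subseteq> {x. a \<bullet> x < b}"
      by (rule hull_minimal) (rule convex_halfspace_lt)
    then show False using ne CK by auto
  qed
qed

lemma dim_cut:
  fixes P :: "'a::euclidean_space set"
  assumes P: "polytope P" and nv: "\<forall>x. x extreme_point_of P \<longrightarrow> a \<bullet> x \<noteq> b"
    and C: "C face_of P" and ne: "C \<inter> {x. a \<bullet> x = b} \<noteq> {}"
  shows "aff_dim (C \<inter> {x. a \<bullet> x = b}) = aff_dim C - 1"
proof -
  obtain p q where p: "p \<in> C" "a \<bullet> p < b" and q: "q \<in> C" "a \<bullet> q > b"
    using both_sides[OF P nv C ne] by blast
  have "\<not> C \<subseteq> {x. a \<bullet> x = b}" using p by auto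
  then have "aff_dim (C \<inter> {x. a \<bullet> x = b}) \<le> aff_dim C - 1" by (rule hyp_le)
  moreover have "aff_dim C \<le> aff_dim (C \<inter> {x. a \<bullet> x = b}) + 1"
    by (rule hyp_ge[OF face_of_imp_convex[OF C] p q])
  ultimately show ?thesis by linarith
qed

lemma parent_sub:
  fixes P :: "'a::euclidean_space set"
  assumes P: "polytope P" and nv: "\<forall>x. x extreme_point_of P \<longrightarrow> a \<bullet> x \<noteq> b"
    and u: "u face_of P" and ne: "{x. a \<bullet> x = b} \<inter> u \<noteq> {}"
    and G: "G face_of P" and sub: "{x. a \<bullet> x = b} \<inter> u \<subseteq> G"
  shows "u \<subseteq> G"
proof (rule ccontr)
  assume nsub: "\<not> u \<subseteq> G"
  define W where "W = u \<inter> G"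
  have WP: "W face_of P" unfolding W_def by (rule face_of_Int[OF u G])
  have Wu: "W face_of u" using face_of_subset[OF WP _ face_of_imp_subset[OF u]] W_def by auto
  have "W \<noteq> u" using nsub W_def by auto
  then have lt: "aff_dim W < aff_dim u" using face_of_aff_dim_lt[OF face_of_imp_convex[OF u] Wu] by simp
  have WH: "W \<inter> {x. a \<bullet> x = b} = u \<inter> {x. a \<bullet> x = b}" using sub W_def by auto
  have neu: "u \<inter> {x. a \<bullet> x = b} \<noteq> {}" using ne by auto
  have "aff_dim (W \<inter> {x. a \<bullet> x = b}) = aff_dim W - 1"
    by (rule dim_cut[OF P nv WP]) (use WH neu in simp)
  moreover have "aff_dim (u \<inter> {x. a \<bullet> x = b}) = aff_dim u - 1"
    by (rule dim_cut[OF P nv u neu])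
  ultimately show False using WH lt by simp
qed

lemma faceQ:
  fixes P :: "'a::euclidean_space set"
  assumes P: "convex P" and G: "G face_of P"
  shows "(G \<inter> {x. a \<bullet> x \<ge> b}) face_of (P \<inter> {x. a \<bullet> x \<ge> b})"
    and "(G \<inter> {x. a \<bullet> x = b}) face_of (P \<inter> {x. a \<bullet> x \<ge> b})"
proof -
  show 1: "(G \<inter> {x. a \<bullet> x \<ge> b}) face_of (P \<inter> {x. a \<bullet> x \<ge> b})"
    by (rule face_of_Int_Int[OF G face_of_refl[OF convex_halfspace_ge]])
  have cQ: "convex (P \<inter> {x. a \<bullet> x \<ge> b})" by (simp add: P convex_Int convex_halfspace_ge)
  have 2: "((P \<inter> {x. a \<bullet> x \<ge> b}) \<inter> {x. a \<bullet> x = b}) face_of (P \<inter> {x. a \<bullet> x \<ge> b})"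
    by (rule face_of_Int_supporting_hyperplane_ge[OF cQ]) auto
  have "(G \<inter> {x. a \<bullet> x \<ge> b}) \<inter> ((P \<inter> {x. a \<bullet> x \<ge> b}) \<inter> {x. a \<bullet> x = b}) = G \<inter> {x. a \<bullet> x = b}"
    using face_of_imp_subset[OF G] by auto
  then show "(G \<inter> {x. a \<bullet> x = b}) face_of (P \<inter> {x. a \<bullet> x \<ge> b})"
    using face_of_Int[OF 1 2] by simp
qed

lemma face_up:
  fixes S :: "'a::euclidean_space set"
  shows "polytope S \<Longrightarrow> T face_of S \<Longrightarrow> T \<noteq> {} \<Longrightarrow> aff_dim T \<le> j \<Longrightarrow> j \<le> aff_dim S
    \<Longrightarrow> \<exists>G. G face_of S \<and> aff_dim G = j \<and> T \<subseteq> G"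
proof (induction "nat (aff_dim S - j)" arbitrary: S)
  case 0
  then have "aff_dim S = j" by simp
  then show ?case using 0 face_of_refl[OF polytope_imp_convex] face_of_imp_subset by blast
next
  case (Suc n)
  have "T \<noteq> S" using Suc by auto
  then obtain E where E: "E facet_of S" "T \<subseteq> E"
    using face_of_polyhedron_subset_facet[OF polytope_imp_polyhedron[OF Suc.prems(1)] Suc.prems(2,3)] by blast
  have EF: "E face_of S" and Ed: "aff_dim E = aff_dim S - 1" using E(1) facet_of_def by auto
  have Ep: "polytope E" using face_of_polytope_polytope[OF Suc.prems(1) EF] .
  have TE: "T face_of E" using face_of_subset[OF Suc.prems(2) E(2) face_of_imp_subset[OF EF]] .
  have "\<exists>G. G face_of E \<and> aff_dim G = j \<and> T \<subseteq> G"
    by (rule Suc.hyps(1)) (use Suc.hyps(2) Ed Ep TE Suc.prems in auto)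
  then show ?case using face_of_trans EF by blast
qed

theorem mainTheorem3:
  fixes P :: "'a::euclidean_space set" and a :: 'a and b :: real and k :: nat
    and u v u' v' :: "'a set"
  assumes simple: "simple_polytope P"
    and a_nz: "a \<noteq> 0"
    and no_vertex: "\<forall>x. x extreme_point_of P \<longrightarrow> a \<bullet> x \<noteq> b"
    and meets_int: "{x. a \<bullet> x = b} \<inter> interior P \<noteq> {}"
    and k_le: "k + 2 \<le> DIM('a)"
    and u'_face: "u' face_of (P \<inter> {x. a \<bullet> x \<ge> b})" and u'_new: "u' \<subseteq> {x. a \<bullet> x = b}"
    and u'_dim: "aff_dim u' = int k"
    and v'_face: "v' face_of (P \<inter> {x. a \<bullet> x \<ge> b})" and v'_new: "v' \<subseteq> {x. a \<bullet> x = b}"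
    and v'_dim: "aff_dim v' = int k"
    and u_face: "u face_of P" and u_par: "u' = {x. a \<bullet> x = b} \<inter> u"
    and u_dim: "aff_dim u = int k + 1"
    and v_face: "v face_of P" and v_par: "v' = {x. a \<bullet> x = b} \<inter> v"
    and v_dim: "aff_dim v = int k + 1"
  shows "(\<exists>F. F face_of (P \<inter> {x. a \<bullet> x \<ge> b}) \<and> aff_dim F = int k + 1 \<and> u' \<subseteq> F \<and> v' \<subseteq> F)
     \<longleftrightarrow> (\<exists>G. G face_of P \<and> aff_dim G = int k + 2 \<and> u \<subseteq> G \<and> v \<subseteq> G)"
  proof -
  let ?H = "{x. a \<bullet> x = b}" and ?Hp = "{x. a \<bullet> x \<ge> b}"
  let ?Q = "P \<inter> ?Hp"
  have P: "polytope P" and dP: "aff_dim P = int DIM('a)" using simple[unfolded simple_polytope_def] by blast+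
  have cP: "convex P" using polytope_imp_convex[OF P] .
  have u'ne: "u' \<noteq> {}" using u'_dim aff_dim_empty[of u'] by auto
  have v'ne: "v' \<noteq> {}" using v'_dim aff_dim_empty[of v'] by auto
  have uH: "?H \<inter> u \<noteq> {}" using u'ne u_par by simp
  have vH: "?H \<inter> v \<noteq> {}" using v'ne v_par by simp
  show ?thesis
  proof
    assume "\<exists>F. F face_of ?Q \<and> aff_dim F = int k + 1 \<and> u' \<subseteq> F \<and> v' \<subseteq> F"
    then obtain F where F: "F face_of ?Q" "aff_dim F = int k + 1" "u' \<subseteq> F" "v' \<subseteq> F" by blast
    have cF: "convex F" using face_of_imp_convex[OF F(1)] .
    show "\<exists>G. G face_of P \<and> aff_dim G = int k + 2 \<and> u \<subseteq> G \<and> v \<subseteq> G"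
    proof (cases "F \<subseteq> ?H")
      case True
      have Fne: "F \<noteq> {}" using F(3) u'ne by auto
      obtain z where z: "z \<in> rel_interior F" using Fne rel_interior_eq_empty[OF cF] by blast
      have zF: "z \<in> F" using z rel_interior_subset by blast
      have FQ: "F \<subseteq> ?Q" using face_of_imp_subset[OF F(1)] .
      define G where "G = \<Inter> {T. T face_of P \<and> z \<in> T}"
      have PA: "P \<in> {T. T face_of P \<and> z \<in> T}" using face_of_refl[OF cP] zF FQ by auto
      have GP: "G face_of P" unfolding G_def by (rule face_of_Inter) (use PA in auto)
      have zG: "z \<in> G" unfolding G_def by auto
      have Gmin: "G \<subseteq> T" if "T face_of P" "z \<in> T" for T using that unfolding G_def by auto
      have Gp: "polytope G" using face_of_polytope_polytope[OF P GP] .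
      have zrG: "z \<in> rel_interior G"
      proof (rule ccontr)
        assume "z \<notin> rel_interior G"
        then have "z \<in> rel_frontier G" using zG closure_subset unfolding rel_frontier_def by auto
        then obtain E where E: "E facet_of G" "z \<in> E"
          using rel_frontier_of_polyhedron[OF polytope_imp_polyhedron[OF Gp]] by auto
        have "E face_of P" using face_of_trans[OF facet_of_imp_face_of[OF E(1)] GP] .
        then have "G \<subseteq> E" using Gmin E(2) by blast
        then have "E = G" using facet_of_imp_subset[OF E(1)] by auto
        then show False using E(1) facet_of_def by auto
      qed
      have zHp: "z \<in> ?Hp" using zF FQ by blast
      have zH: "z \<in> ?H" using zF True by blast
      have "(G \<inter> ?Hp) \<inter> rel_interior F \<noteq> {}" using z zG zHp by blast
      then have "F \<subseteq> G \<inter> ?Hp"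
        by (rule subset_of_face_of[OF faceQ(1)[OF cP GP] FQ])
      have GH: "(G \<inter> ?H) face_of ?Q" using faceQ(2)[OF cP GP] .
      have "rel_interior G \<inter> ?H \<noteq> {}" using zrG zH by blast
      then have "rel_interior (G \<inter> ?H) = rel_interior G \<inter> ?H"
        by (rule convex_affine_rel_interior_Int[OF face_of_imp_convex[OF GP] affine_hyperplane])
      then have "z \<in> rel_interior (G \<inter> ?H)" using zrG zH by blast
      then have "rel_interior F \<inter> rel_interior (G \<inter> ?H) \<noteq> {}" using z by blast
      then have FeqG: "F = G \<inter> ?H"
        by (rule face_of_eq[OF F(1) GH])
      have "aff_dim (G \<inter> ?H) = aff_dim G - 1"
      proof (rule dim_cut[OF P no_vertex GP])
        show "G \<inter> ?H \<noteq> {}" using FeqG Fne by simp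
      qed
      then have Gd: "aff_dim G = int k + 2" using FeqG F(2) by simp
      have "u \<subseteq> G" by (rule parent_sub[OF P no_vertex u_face uH GP]) (use F(3) u_par FeqG in auto)
      moreover have "v \<subseteq> G" by (rule parent_sub[OF P no_vertex v_face vH GP]) (use F(4) v_par FeqG in auto)
      ultimately show ?thesis using GP Gd by blast
    next
      case False
      define E where "E = F \<inter> ?H"
      have FQ: "F \<subseteq> ?Q" using face_of_imp_subset[OF F(1)] .
      have EQ: "E \<subseteq> ?Q" using FQ E_def by auto
      have cE: "convex E" unfolding E_def by (simp add: cF convex_Int convex_hyperplane)
      have Ed: "aff_dim E \<le> int k" using hyp_le[OF False] F(2) E_def by simp
      have "u' = E"
      proof (rule ccontr)
        assume ne: "u' \<noteq> E"
        have "u' face_of E" by (rule face_of_subset[OF u'_face _ EQ]) (use F(3) u'_new E_def in auto)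
        then show False using face_of_aff_dim_lt[OF cE _ ne] u'_dim Ed by simp
      qed
      moreover have "v' = E"
      proof (rule ccontr)
        assume ne: "v' \<noteq> E"
        have "v' face_of E" by (rule face_of_subset[OF v'_face _ EQ]) (use F(4) v'_new E_def in auto)
        then show False using face_of_aff_dim_lt[OF cE _ ne] v'_dim Ed by simp
      qed
      ultimately have uv': "u' = v'" by simp
      have "u \<subseteq> v" by (rule parent_sub[OF P no_vertex u_face uH v_face]) (use uv' u_par v_par in auto)
      moreover have "v \<subseteq> u" by (rule parent_sub[OF P no_vertex v_face vH u_face]) (use uv' u_par v_par in auto)
      ultimately have "u = v" by simp
      moreover have "\<exists>G. G face_of P \<and> aff_dim G = int k + 2 \<and> u \<subseteq> G"
      proof (rule face_up[OF P u_face])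
        show "u \<noteq> {}" using uH by blast
        show "aff_dim u \<le> int k + 2" using u_dim by simp
        show "int k + 2 \<le> aff_dim P" using dP k_le by linarith
      qed
      ultimately show ?thesis by auto
    qed
  next
    assume "\<exists>G. G face_of P \<and> aff_dim G = int k + 2 \<and> u \<subseteq> G \<and> v \<subseteq> G"
    then obtain G where G: "G face_of P" "aff_dim G = int k + 2" "u \<subseteq> G" "v \<subseteq> G" by blast
    have "aff_dim (G \<inter> ?H) = aff_dim G - 1"
    proof (rule dim_cut[OF P no_vertex G(1)])
      show "G \<inter> ?H \<noteq> {}" using G(3) uH by auto
    qed
    then have "aff_dim (G \<inter> ?H) = int k + 1" using G(2) by simp
    moreover have "(G \<inter> ?H) face_of ?Q" using faceQ(2)[OF cP G(1)] .
    moreover have "u' \<subseteq> G \<inter> ?H" "v' \<subseteq> G \<inter> ?H" using G u_par v_par by auto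
    ultimately show "\<exists>F. F face_of ?Q \<and> aff_dim F = int k + 1 \<and> u' \<subseteq> F \<and> v' \<subseteq> F"
      by (intro exI[where x="G \<inter> ?H"] conjI)
  qed
qed

end
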